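(* Let $j:B\to\widehat A$ be an aspherical functor (in the sense below). Let $C$ be the full subcategory of $\widehat A$ whose objects are the representable presheaves and the presheaves $j(b)$ for $b\in B$; let $i:C\hookrightarrow\widehat A$ be the inclusion, $j':B\to C$ the factorization of $j$ through $C$ (so $ij'=j$), and $h':A\to C$ the factorization of the Yoneda embedding $h:A\to\widehat A$ (so $ih'=h$). Then $j'$ and $h'$ are aspherical functors.
   Context: A small category is aspherical if its nerve is weakly contractible; a presheaf $X$ on a small category $D$ is aspherical if its category of elements $D/X$ is aspherical. A functor $u:D\to E$ between small categories is aspherical if for every object $e$ of $E$ the category $D/e$ (objects $(d,u(d)\to e)$) is aspherical. For a functor $j:B\to\widehat A$ (presheaves of sets on $A$), let $j^*:\widehat A\to\widehat B$, $j^*(X)(b)=\mathrm{Hom}_{\widehat A}(j(b),X)$. Such $j$ is called aspherical if: (1) for every $b\in B$, $j(b)$ is an aspherical presheaf on $A$; (2) for every $b\in B$, $j^*j(b)$ is an aspherical presheaf on $B$; (3) for every $a\in A$, $j^*(a)$ is an aspherical presheaf on $B$ ($a$ denoting the representable presheaf). *)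

theory Defs
  imports "HOL-Analysis.Analysis"
begin

text \<open>A small category: a set of objects, a set of arrows, domain, codomain,
  identities, and composition (Comp g f means g after f).\<close>

record ('o, 'm) cat =
  Obj  :: "'o set"
  Arr  :: "'m set"
  Dom  :: "'m \<Rightarrow> 'o"
  Cod  :: "'m \<Rightarrow> 'o"
  Idm  :: "'o \<Rightarrow> 'm"
  Comp :: "'m \<Rightarrow> 'm \<Rightarrow> 'm"

definition hom :: "('o, 'm) cat \<Rightarrow> 'o \<Rightarrow> 'o \<Rightarrow> 'm set" where
  "hom C x y = {f \<in> Arr C. Dom C f = x \<and> Cod C f = y}"

definition category :: "('o, 'm) cat \<Rightarrow> bool" where
  "category C \<longleftrightarrow>
     (\<forall>f\<in>Arr C. Dom C f \<in> Obj C \<and> Cod C f \<in> Obj C) \<and>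
     (\<forall>x\<in>Obj C. Idm C x \<in> hom C x x) \<and>
     (\<forall>f\<in>Arr C. \<forall>g\<in>Arr C. Cod C f = Dom C g \<longrightarrow>
         Comp C g f \<in> hom C (Dom C f) (Cod C g)) \<and>
     (\<forall>f\<in>Arr C. Comp C f (Idm C (Dom C f)) = f \<and> Comp C (Idm C (Cod C f)) f = f) \<and>
     (\<forall>f\<in>Arr C. \<forall>g\<in>Arr C. \<forall>h\<in>Arr C. Cod C f = Dom C g \<longrightarrow> Cod C g = Dom C h \<longrightarrow>
         Comp C h (Comp C g f) = Comp C (Comp C h g) f)"

definition is_functor :: "('o, 'm) cat \<Rightarrow> ('p, 'n) cat \<Rightarrow> ('o \<Rightarrow> 'p) \<Rightarrow> ('m \<Rightarrow> 'n) \<Rightarrow> bool" where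
  "is_functor C D Fo Fm \<longleftrightarrow>
     (\<forall>x\<in>Obj C. Fo x \<in> Obj D) \<and>
     (\<forall>f\<in>Arr C. Fm f \<in> hom D (Fo (Dom C f)) (Fo (Cod C f))) \<and>
     (\<forall>x\<in>Obj C. Fm (Idm C x) = Idm D (Fo x)) \<and>
     (\<forall>f\<in>Arr C. \<forall>g\<in>Arr C. Cod C f = Dom C g \<longrightarrow>
         Fm (Comp C g f) = Comp D (Fm g) (Fm f))"

text \<open>Presheaves are taken extensional (empty outside objects, undefined action outside its
  domain) so that HOL equality is equality of presheaves.\<close>

type_synonym ('o, 'm, 'v) psh = "('o \<Rightarrow> 'v set) \<times> ('m \<Rightarrow> 'v \<Rightarrow> 'v)"

definition presheaf :: "('o, 'm) cat \<Rightarrow> ('o, 'm, 'v) psh \<Rightarrow> bool" where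
  "presheaf A X \<longleftrightarrow>
     (\<forall>x. x \<notin> Obj A \<longrightarrow> fst X x = {}) \<and>
     (\<forall>f\<in>Arr A. \<forall>v\<in>fst X (Cod A f). snd X f v \<in> fst X (Dom A f)) \<and>
     (\<forall>x\<in>Obj A. \<forall>v\<in>fst X x. snd X (Idm A x) v = v) \<and>
     (\<forall>f\<in>Arr A. \<forall>g\<in>Arr A. Cod A f = Dom A g \<longrightarrow>
         (\<forall>v\<in>fst X (Cod A g). snd X (Comp A g f) v = snd X f (snd X g v))) \<and>
     (\<forall>f v. \<not> (f \<in> Arr A \<and> v \<in> fst X (Cod A f)) \<longrightarrow> snd X f v = undefined)"

definition nt_hom :: "('o, 'm) cat \<Rightarrow> ('o, 'm, 'v) psh \<Rightarrow> ('o, 'm, 'w) psh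
                       \<Rightarrow> ('o \<Rightarrow> 'v \<Rightarrow> 'w) set" where
  "nt_hom A X Y = {\<tau>.
     (\<forall>x\<in>Obj A. \<forall>v\<in>fst X x. \<tau> x v \<in> fst Y x) \<and>
     (\<forall>f\<in>Arr A. \<forall>v\<in>fst X (Cod A f). \<tau> (Dom A f) (snd X f v) = snd Y f (\<tau> (Cod A f) v)) \<and>
     (\<forall>x v. \<not> (x \<in> Obj A \<and> v \<in> fst X x) \<longrightarrow> \<tau> x v = undefined)}"

text \<open>The category of presheaves on A, with values in sets of elements of the type 'm
  of arrows of A (a universe containing A).  Arrows are triples (source, target, \<tau>).\<close>

type_synonym ('o, 'm) pshA = "('o, 'm, 'm) psh"
type_synonym ('o, 'm) pshA_arr = "('o, 'm) pshA \<times> ('o, 'm) pshA \<times> ('o \<Rightarrow> 'm \<Rightarrow> 'm)"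

definition nt_id :: "('o, 'm) cat \<Rightarrow> ('o, 'm, 'v) psh \<Rightarrow> ('o \<Rightarrow> 'v \<Rightarrow> 'v)" where
  "nt_id A X = (\<lambda>x v. if x \<in> Obj A \<and> v \<in> fst X x then v else undefined)"

definition nt_comp :: "('o, 'm) cat \<Rightarrow> ('o, 'm, 'u) psh \<Rightarrow> ('o \<Rightarrow> 'v \<Rightarrow> 'w)
                        \<Rightarrow> ('o \<Rightarrow> 'u \<Rightarrow> 'v) \<Rightarrow> ('o \<Rightarrow> 'u \<Rightarrow> 'w)" where
  "nt_comp A X \<tau> \<sigma> = (\<lambda>x v. if x \<in> Obj A \<and> v \<in> fst X x then \<tau> x (\<sigma> x v) else undefined)"

definition psh_cat :: "('o, 'm) cat \<Rightarrow> (('o, 'm) pshA, ('o, 'm) pshA_arr) cat" where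
  "psh_cat A =
     \<lparr> Obj = {X. presheaf A X},
       Arr = {(X, Y, \<tau>). presheaf A X \<and> presheaf A Y \<and> \<tau> \<in> nt_hom A X Y},
       Dom = (\<lambda>t. fst t),
       Cod = (\<lambda>t. fst (snd t)),
       Idm = (\<lambda>X. (X, X, nt_id A X)),
       Comp = (\<lambda>t s. (fst s, fst (snd t), nt_comp A (fst s) (snd (snd t)) (snd (snd s)))) \<rparr>"

definition yo :: "('o, 'm) cat \<Rightarrow> 'o \<Rightarrow> ('o, 'm) pshA" where
  "yo A a = (\<lambda>x. if x \<in> Obj A then hom A x a else {},
             \<lambda>f g. if f \<in> Arr A \<and> g \<in> hom A (Cod A f) a then Comp A g f else undefined)"

definition yo_arr :: "('o, 'm) cat \<Rightarrow> 'm \<Rightarrow> ('o, 'm) pshA_arr" where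
  "yo_arr A f = (yo A (Dom A f), yo A (Cod A f),
                 \<lambda>x g. if x \<in> Obj A \<and> g \<in> hom A x (Dom A f) then Comp A f g else undefined)"

definition full_sub :: "('o, 'm) cat \<Rightarrow> 'o set \<Rightarrow> ('o, 'm) cat" where
  "full_sub C S = C\<lparr> Obj := S, Arr := {f \<in> Arr C. Dom C f \<in> S \<and> Cod C f \<in> S} \<rparr>"

definition pull_hom :: "('o, 'm) cat \<Rightarrow> ('p, 'n) cat \<Rightarrow> ('o \<Rightarrow> 'p) \<Rightarrow> ('m \<Rightarrow> 'n) \<Rightarrow> 'p
                         \<Rightarrow> ('o, 'm, 'n) psh" where
  "pull_hom D E uo um e =
     (\<lambda>d. if d \<in> Obj D then hom E (uo d) e else {},
      \<lambda>f g. if f \<in> Arr D \<and> g \<in> hom E (uo (Cod D f)) e then Comp E g (um f) else undefined)"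

definition jstar :: "('o, 'm) cat \<Rightarrow> ('p, 'n) cat \<Rightarrow> ('p \<Rightarrow> ('o, 'm) pshA)
                      \<Rightarrow> ('n \<Rightarrow> ('o, 'm) pshA_arr) \<Rightarrow> ('o, 'm) pshA
                      \<Rightarrow> ('p, 'n, ('o, 'm) pshA_arr) psh" where
  "jstar A B jo jm X = pull_hom B (psh_cat A) jo jm X"

definition elements :: "('o, 'm) cat \<Rightarrow> ('o, 'm, 'v) psh \<Rightarrow> ('o \<times> 'v, 'm \<times> 'v) cat" where
  "elements A X =
     \<lparr> Obj = {(x, v). x \<in> Obj A \<and> v \<in> fst X x},
       Arr = {(f, v). f \<in> Arr A \<and> v \<in> fst X (Cod A f)},
       Dom = (\<lambda>(f, v). (Dom A f, snd X f v)),
       Cod = (\<lambda>(f, v). (Cod A f, v)),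
       Idm = (\<lambda>(x, v). (Idm A x, v)),
       Comp = (\<lambda>(g, w) (f, v). (Comp A g f, w)) \<rparr>"

text \<open>The category D/e for u : D \<rightarrow> E: objects (d, g : u d \<rightarrow> e), arrows (f, g) with
  f : d \<rightarrow> d', g : u d' \<rightarrow> e, going from (d, g \<circ> u f) to (d', g).\<close>

definition slice :: "('o, 'm) cat \<Rightarrow> ('p, 'n) cat \<Rightarrow> ('o \<Rightarrow> 'p) \<Rightarrow> ('m \<Rightarrow> 'n) \<Rightarrow> 'p
                      \<Rightarrow> ('o \<times> 'n, 'm \<times> 'n) cat" where
  "slice D E uo um e = elements D (pull_hom D E uo um e)"

text \<open>n-simplices of the nerve: functors [n] \<rightarrow> C, encoded as sigma i j : x_i \<rightarrow> x_j for
  i \<le> j \<le> n (undefined elsewhere).\<close>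

definition nerve :: "('o, 'm) cat \<Rightarrow> nat \<Rightarrow> (nat \<Rightarrow> nat \<Rightarrow> 'm) set" where
  "nerve C n = {\<sigma>.
     (\<forall>i\<le>n. Dom C (\<sigma> i i) \<in> Obj C \<and> \<sigma> i i = Idm C (Dom C (\<sigma> i i))) \<and>
     (\<forall>i j. i \<le> j \<and> j \<le> n \<longrightarrow> \<sigma> i j \<in> hom C (Dom C (\<sigma> i i)) (Dom C (\<sigma> j j))) \<and>
     (\<forall>i j k. i \<le> j \<and> j \<le> k \<and> k \<le> n \<longrightarrow> Comp C (\<sigma> j k) (\<sigma> i j) = \<sigma> i k) \<and>
     (\<forall>i j. \<not> (i \<le> j \<and> j \<le> n) \<longrightarrow> \<sigma> i j = undefined)}"

definition std_simplex :: "nat \<Rightarrow> (nat \<Rightarrow> real) set" where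
  "std_simplex n = {t. (\<forall>i. 0 \<le> t i) \<and> (\<forall>i>n. t i = 0) \<and> (\<Sum>i\<le>n. t i) = 1}"

definition mono_map :: "nat \<Rightarrow> nat \<Rightarrow> (nat \<Rightarrow> nat) \<Rightarrow> bool" where
  "mono_map m n \<theta> \<longleftrightarrow> (\<forall>i j. i \<le> j \<and> j \<le> m \<longrightarrow> \<theta> i \<le> \<theta> j) \<and> (\<forall>i\<le>m. \<theta> i \<le> n)"

definition simp_face :: "(nat \<Rightarrow> nat \<Rightarrow> 'm) \<Rightarrow> (nat \<Rightarrow> nat) \<Rightarrow> nat \<Rightarrow> (nat \<Rightarrow> nat \<Rightarrow> 'm)" where
  "simp_face \<sigma> \<theta> m = (\<lambda>i j. if i \<le> j \<and> j \<le> m then \<sigma> (\<theta> i) (\<theta> j) else undefined)"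

definition simp_push :: "(nat \<Rightarrow> nat) \<Rightarrow> nat \<Rightarrow> nat \<Rightarrow> (nat \<Rightarrow> real) \<Rightarrow> (nat \<Rightarrow> real)" where
  "simp_push \<theta> m n t = (\<lambda>k. if k \<le> n then (\<Sum>i\<in>{i. i \<le> m \<and> \<theta> i = k}. t i) else 0)"

type_synonym 'm rpt = "nat \<times> (nat \<Rightarrow> nat \<Rightarrow> 'm) \<times> (nat \<Rightarrow> real)"

text \<open>Generating relation of the realization coend: (sigma \<circ> theta, s) ~ (sigma, theta_* s).\<close>

definition real_gen :: "('o, 'm) cat \<Rightarrow> 'm rpt \<Rightarrow> 'm rpt \<Rightarrow> bool" where
  "real_gen C p q \<longleftrightarrow> (\<exists>m n \<sigma> \<theta> s.
      p = (m, simp_face \<sigma> \<theta> m, s) \<and> q = (n, \<sigma>, simp_push \<theta> m n s) \<and>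
      \<sigma> \<in> nerve C n \<and> mono_map m n \<theta> \<and> s \<in> std_simplex m)"

definition real_pts :: "('o, 'm) cat \<Rightarrow> 'm rpt set" where
  "real_pts C = {(n, \<sigma>, t). \<sigma> \<in> nerve C n \<and> t \<in> std_simplex n}"

definition real_class :: "('o, 'm) cat \<Rightarrow> 'm rpt \<Rightarrow> 'm rpt set" where
  "real_class C p = {q. (\<lambda>x y. real_gen C x y \<or> real_gen C y x)\<^sup>*\<^sup>* p q}"

definition realization :: "('o, 'm) cat \<Rightarrow> 'm rpt set topology" where
  "realization C = topology (\<lambda>U. U \<subseteq> real_class C ` real_pts C \<and>
      (\<forall>n \<sigma>. \<sigma> \<in> nerve C n \<longrightarrow>
         openin (subtopology (powertop_real UNIV) (std_simplex n))
                {t \<in> std_simplex n. real_class C (n, \<sigma>, t) \<in> U}))"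

definition weakly_contractible :: "'a topology \<Rightarrow> bool" where
  "weakly_contractible X \<longleftrightarrow> topspace X \<noteq> {} \<and>
     (\<forall>n f. continuous_map (nsphere n) X f \<longrightarrow>
        (\<exists>c. homotopic_with (\<lambda>_. True) (nsphere n) X f (\<lambda>_. c)))"

definition aspherical_cat :: "('o, 'm) cat \<Rightarrow> bool" where
  "aspherical_cat C \<longleftrightarrow> weakly_contractible (realization C)"

definition aspherical_psh :: "('o, 'm) cat \<Rightarrow> ('o, 'm, 'v) psh \<Rightarrow> bool" where
  "aspherical_psh A X \<longleftrightarrow> aspherical_cat (elements A X)"

definition aspherical_functor :: "('o, 'm) cat \<Rightarrow> ('p, 'n) cat \<Rightarrow> ('o \<Rightarrow> 'p) \<Rightarrow> ('m \<Rightarrow> 'n) \<Rightarrow> bool" where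
  "aspherical_functor D E uo um \<longleftrightarrow> (\<forall>e\<in>Obj E. aspherical_cat (slice D E uo um e))"

definition aspherical_psh_functor :: "('o, 'm) cat \<Rightarrow> ('p, 'n) cat \<Rightarrow> ('p \<Rightarrow> ('o, 'm) pshA)
                                       \<Rightarrow> ('n \<Rightarrow> ('o, 'm) pshA_arr) \<Rightarrow> bool" where
  "aspherical_psh_functor A B jo jm \<longleftrightarrow>
     (\<forall>b\<in>Obj B. aspherical_psh A (jo b)) \<and>
     (\<forall>b\<in>Obj B. aspherical_psh B (jstar A B jo jm (jo b))) \<and>
     (\<forall>a\<in>Obj A. aspherical_psh B (jstar A B jo jm (yo A a)))"

end

theory Submission
  imports Defs
begin

definition rrel :: "('o,'m) cat \<Rightarrow> 'm rpt \<Rightarrow> 'm rpt \<Rightarrow> bool" where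
  "rrel C x y \<longleftrightarrow> real_gen C x y \<or> real_gen C y x"

lemma real_class_rrel: "real_class C p = {q. (rrel C)\<^sup>*\<^sup>* p q}"
proof -
  have "rrel C = (\<lambda>x y. real_gen C x y \<or> real_gen C y x)" by (auto simp: rrel_def fun_eq_iff)
  then show ?thesis by (simp add: real_class_def)
qed

lemma rrel_sym: "rrel C x y \<Longrightarrow> rrel C y x" by (auto simp: rrel_def)

lemma rtranclp_rrel_sym: "(rrel C)\<^sup>*\<^sup>* p q \<Longrightarrow> (rrel C)\<^sup>*\<^sup>* q p"
proof (induction rule: rtranclp_induct)
  case base then show ?case by simp
next
  case (step y z) then show ?case
    by (meson converse_rtranclp_into_rtranclp rrel_sym)
qed

lemma real_class_eq_iff: "real_class C p = real_class C q \<longleftrightarrow> (rrel C)\<^sup>*\<^sup>* p q"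
proof
  assume "real_class C p = real_class C q"
  then have "q \<in> real_class C p" by (simp add: real_class_rrel)
  then show "(rrel C)\<^sup>*\<^sup>* p q" by (simp add: real_class_rrel)
next
  assume h: "(rrel C)\<^sup>*\<^sup>* p q"
  show "real_class C p = real_class C q"
    unfolding real_class_rrel using h rtranclp_rrel_sym[OF h]
    by (auto intro: rtranclp_trans)
qed

lemma real_class_eqI: "real_gen C p q \<Longrightarrow> real_class C p = real_class C q"
  by (simp add: real_class_eq_iff rrel_def r_into_rtranclp)

abbreviation simpT :: "nat \<Rightarrow> (nat \<Rightarrow> real) topology" where
  "simpT n \<equiv> subtopology (powertop_real UNIV) (std_simplex n)"

definition ropen :: "('o,'m) cat \<Rightarrow> 'm rpt set set \<Rightarrow> bool" where
  "ropen C U \<longleftrightarrow> U \<subseteq> real_class C ` real_pts C \<and>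
      (\<forall>n \<sigma>. \<sigma> \<in> nerve C n \<longrightarrow>
         openin (simpT n) {t \<in> std_simplex n. real_class C (n, \<sigma>, t) \<in> U})"

lemma istopology_ropen: "istopology (ropen C)"
  unfolding istopology_def
proof (intro conjI allI impI)
  fix S T assume S: "ropen C S" and T: "ropen C T"
  show "ropen C (S \<inter> T)"
    unfolding ropen_def
  proof (intro conjI allI impI)
    show "S \<inter> T \<subseteq> real_class C ` real_pts C" using S by (auto simp: ropen_def)
    fix n \<sigma> assume "\<sigma> \<in> nerve C n"
    then have "openin (simpT n) ({t \<in> std_simplex n. real_class C (n, \<sigma>, t) \<in> S} \<inter>
                  {t \<in> std_simplex n. real_class C (n, \<sigma>, t) \<in> T})"
      using S T by (intro openin_Int) (auto simp: ropen_def)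
    moreover have "{t \<in> std_simplex n. real_class C (n, \<sigma>, t) \<in> S \<inter> T} =
        {t \<in> std_simplex n. real_class C (n, \<sigma>, t) \<in> S} \<inter> {t \<in> std_simplex n. real_class C (n, \<sigma>, t) \<in> T}"
      by auto
    ultimately show "openin (simpT n) {t \<in> std_simplex n. real_class C (n, \<sigma>, t) \<in> S \<inter> T}" by simp
  qed
next
  fix K assume K: "\<forall>U\<in>K. ropen C U"
  show "ropen C (\<Union>K)"
    unfolding ropen_def
  proof (intro conjI allI impI)
    show "\<Union>K \<subseteq> real_class C ` real_pts C" using K by (auto simp: ropen_def)
    fix n \<sigma> assume "\<sigma> \<in> nerve C n"
    then have "openin (simpT n) (\<Union>U\<in>K. {t \<in> std_simplex n. real_class C (n, \<sigma>, t) \<in> U})"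
      using K by (intro openin_Union) (auto simp: ropen_def)
    moreover have "{t \<in> std_simplex n. real_class C (n, \<sigma>, t) \<in> \<Union>K} =
        (\<Union>U\<in>K. {t \<in> std_simplex n. real_class C (n, \<sigma>, t) \<in> U})"
      by auto
    ultimately show "openin (simpT n) {t \<in> std_simplex n. real_class C (n, \<sigma>, t) \<in> \<Union>K}" by simp
  qed
qed

lemma openin_realization: "openin (realization C) U \<longleftrightarrow> ropen C U"
proof -
  have "realization C = topology (ropen C)"
    unfolding realization_def ropen_def[abs_def] by simp
  then show ?thesis using topology_inverse'[OF istopology_ropen[of C]] by metis
qed

lemma openin_simpT_self: "openin (simpT n) (std_simplex n)"
proof -
  have "topspace (simpT n) = std_simplex n" by simp
  then show ?thesis by (metis openin_topspace)
qed

lemma ropen_top: "ropen C (real_class C ` real_pts C)"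
proof -
  have "\<sigma> \<in> nerve C n \<Longrightarrow> {t \<in> std_simplex n. real_class C (n, \<sigma>, t) \<in> real_class C ` real_pts C} = std_simplex n" for n \<sigma>
    by (auto simp: real_pts_def)
  then show ?thesis unfolding ropen_def using openin_simpT_self by auto
qed

lemma topspace_realization: "topspace (realization C) = real_class C ` real_pts C"
proof
  show "topspace (realization C) \<subseteq> real_class C ` real_pts C"
    unfolding topspace_def openin_realization ropen_def by auto
  show "real_class C ` real_pts C \<subseteq> topspace (realization C)"
    using ropen_top openin_realization openin_subset by blast
qed


lemma wc_transfer:
  assumes f: "continuous_map X Y f" and g: "continuous_map Y X g"
    and fg: "\<forall>y\<in>topspace Y. f (g y) = y" and wc: "weakly_contractible X"
  shows "weakly_contractible Y"
  unfolding weakly_contractible_def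
proof (intro conjI allI impI)
  show "topspace Y \<noteq> {}" using wc f unfolding weakly_contractible_def continuous_map_def by blast
  fix n k assume k: "continuous_map (nsphere n) Y k"
  have "continuous_map (nsphere n) X (g \<circ> k)" using k g by (rule continuous_map_compose)
  then obtain c where "homotopic_with (\<lambda>_. True) (nsphere n) X (g \<circ> k) (\<lambda>_. c)"
    using wc unfolding weakly_contractible_def by blast
  then have h1: "homotopic_with (\<lambda>_. True) (nsphere n) Y (f \<circ> (g \<circ> k)) (f \<circ> (\<lambda>_. c))"
    using f by (rule homotopic_with_compose_continuous_map_left) simp
  have h0: "homotopic_with (\<lambda>_. True) (nsphere n) Y k (f \<circ> (g \<circ> k))"
  proof (rule homotopic_with_equal)
    show "continuous_map (nsphere n) Y k" by fact
    fix x assume "x \<in> topspace (nsphere n)"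
    then have "k x \<in> topspace Y" using k by (simp add: continuous_map_def Pi_iff)
    then show "k x = (f \<circ> (g \<circ> k)) x" using fg by simp
  qed auto
  have "homotopic_with (\<lambda>_. True) (nsphere n) Y k (\<lambda>_. f c)"
    using homotopic_with_trans[OF h0 h1] by (simp add: o_def)
  then show "\<exists>c. homotopic_with (\<lambda>_. True) (nsphere n) Y k (\<lambda>_. c)" by blast
qed

lemma wc_contractible:
  assumes "contractible_space X" "topspace X \<noteq> {}"
  shows "weakly_contractible X"
  unfolding weakly_contractible_def
proof (intro conjI allI impI)
  show "topspace X \<noteq> {}" by fact
  fix n k assume "continuous_map (nsphere n) X k"
  then obtain c where "homotopic_with (\<lambda>h. True) (nsphere n) X k (\<lambda>x. c)"
    using nullhomotopic_into_contractible_space assms(1) by blast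
  then show "\<exists>c. homotopic_with (\<lambda>_. True) (nsphere n) X k (\<lambda>_. c)" by blast
qed

section \<open>Isomorphism invariance\<close>

definition nmap :: "('m \<Rightarrow> 'n) \<Rightarrow> nat \<Rightarrow> (nat \<Rightarrow> nat \<Rightarrow> 'm) \<Rightarrow> (nat \<Rightarrow> nat \<Rightarrow> 'n)" where
  "nmap Fm n \<sigma> = (\<lambda>i j. if i \<le> j \<and> j \<le> n then Fm (\<sigma> i j) else undefined)"

definition pmap :: "('m \<Rightarrow> 'n) \<Rightarrow> 'm rpt \<Rightarrow> 'n rpt" where
  "pmap Fm p = (fst p, nmap Fm (fst p) (fst (snd p)), snd (snd p))"

lemma pmap_simp[simp]: "pmap Fm (n, \<sigma>, t) = (n, nmap Fm n \<sigma>, t)"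
  by (simp add: pmap_def)

lemma nerve_nmap:
  assumes F: "is_functor C D Fo Fm" and s: "\<sigma> \<in> nerve C n"
  shows "nmap Fm n \<sigma> \<in> nerve D n"
proof -
  have ar: "\<sigma> i j \<in> hom C (Dom C (\<sigma> i i)) (Dom C (\<sigma> j j))" if "i \<le> j" "j \<le> n" for i j
    using s that by (auto simp: nerve_def)
  have Fh: "f \<in> hom C x y \<Longrightarrow> Fm f \<in> hom D (Fo x) (Fo y)" for f x y
    using F by (auto simp: is_functor_def hom_def)
  have Fid: "x \<in> Obj C \<Longrightarrow> Fm (Idm C x) = Idm D (Fo x)" for x
    using F by (auto simp: is_functor_def)
  have Fob: "x \<in> Obj C \<Longrightarrow> Fo x \<in> Obj D" for x using F by (auto simp: is_functor_def)
  have Fc: "f \<in> Arr C \<Longrightarrow> g \<in> Arr C \<Longrightarrow> Cod C f = Dom C g \<Longrightarrow> Fm (Comp C g f) = Comp D (Fm g) (Fm f)" for f g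
    using F by (auto simp: is_functor_def)
  have dii: "i \<le> n \<Longrightarrow> Dom D (Fm (\<sigma> i i)) = Fo (Dom C (\<sigma> i i))" for i
    using Fh[OF ar[of i i]] by (auto simp: hom_def)
  show ?thesis
    unfolding nerve_def mem_Collect_eq
  proof (intro conjI allI impI)
    fix i assume i: "i \<le> n"
    have o: "Dom C (\<sigma> i i) \<in> Obj C" and e: "\<sigma> i i = Idm C (Dom C (\<sigma> i i))" using s i by (auto simp: nerve_def)
    show "Dom D (nmap Fm n \<sigma> i i) \<in> Obj D" using dii[OF i] Fob[OF o] i by (simp add: nmap_def)
    show "nmap Fm n \<sigma> i i = Idm D (Dom D (nmap Fm n \<sigma> i i))"
      using i dii[OF i] Fid[OF o] e by (simp add: nmap_def)
  next
    fix i j assume ij: "i \<le> j \<and> j \<le> n"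
    then show "nmap Fm n \<sigma> i j \<in> hom D (Dom D (nmap Fm n \<sigma> i i)) (Dom D (nmap Fm n \<sigma> j j))"
      using Fh[OF ar[of i j]] dii[of i] dii[of j] by (simp add: nmap_def)
  next
    fix i j k assume ijk: "i \<le> j \<and> j \<le> k \<and> k \<le> n"
    have "Comp C (\<sigma> j k) (\<sigma> i j) = \<sigma> i k" using s ijk by (auto simp: nerve_def)
    moreover have "Fm (Comp C (\<sigma> j k) (\<sigma> i j)) = Comp D (Fm (\<sigma> j k)) (Fm (\<sigma> i j))"
      using ar[of i j] ar[of j k] ijk by (intro Fc) (auto simp: hom_def)
    ultimately show "Comp D (nmap Fm n \<sigma> j k) (nmap Fm n \<sigma> i j) = nmap Fm n \<sigma> i k"
      using ijk by (simp add: nmap_def)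
  next
    fix i j assume "\<not> (i \<le> j \<and> j \<le> n)"
    then show "nmap Fm n \<sigma> i j = undefined" by (auto simp: nmap_def)
  qed
qed

lemma nmap_simp_face:
  assumes "mono_map m n \<theta>"
  shows "nmap Fm m (simp_face \<sigma> \<theta> m) = simp_face (nmap Fm n \<sigma>) \<theta> m"
  using assms by (auto simp: nmap_def simp_face_def mono_map_def fun_eq_iff)

lemma real_gen_pmap:
  assumes F: "is_functor C D Fo Fm" and g: "real_gen C p q"
  shows "real_gen D (pmap Fm p) (pmap Fm q)"
proof -
  obtain m n \<sigma> \<theta> s where p: "p = (m, simp_face \<sigma> \<theta> m, s)" and q: "q = (n, \<sigma>, simp_push \<theta> m n s)"
    and s: "\<sigma> \<in> nerve C n" and th: "mono_map m n \<theta>" and ss: "s \<in> std_simplex m"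
    using g unfolding real_gen_def by blast
  show ?thesis unfolding real_gen_def
    apply (rule exI[of _ m], rule exI[of _ n], rule exI[of _ "nmap Fm n \<sigma>"], rule exI[of _ \<theta>], rule exI[of _ s])
    using p q nerve_nmap[OF F s] th ss nmap_simp_face[OF th] by simp
qed

lemma simp_face_nerve:
  assumes s: "\<sigma> \<in> nerve C n" and th: "mono_map m n \<theta>"
  shows "simp_face \<sigma> \<theta> m \<in> nerve C m"
  using assms unfolding nerve_def mono_map_def simp_face_def mem_Collect_eq
  apply (intro conjI allI impI)
  by auto

lemma simp_push_simplex:
  assumes th: "mono_map m n \<theta>" and ss: "s \<in> std_simplex m"
  shows "simp_push \<theta> m n s \<in> std_simplex n"
proof -
  have "(\<Sum>k\<le>n. simp_push \<theta> m n s k) = (\<Sum>k\<le>n. sum s {i \<in> {..m}. \<theta> i = k})"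
    by (intro sum.cong) (auto simp: simp_push_def intro!: sum.cong)
  also have "\<dots> = sum s {..m}"
    by (rule sum.group) (use th in \<open>auto simp: mono_map_def\<close>)
  also have "\<dots> = 1" using ss by (simp add: std_simplex_def)
  finally show ?thesis using ss unfolding std_simplex_def simp_push_def
    by (auto intro!: sum_nonneg)
qed

lemma real_gen_pts: "real_gen C p q \<Longrightarrow> p \<in> real_pts C \<and> q \<in> real_pts C"
  unfolding real_gen_def real_pts_def
  using simp_face_nerve simp_push_simplex by fastforce

lemma rrel_pts: "(rrel C)\<^sup>*\<^sup>* p q \<Longrightarrow> p \<in> real_pts C \<Longrightarrow> q \<in> real_pts C"
  by (induction rule: rtranclp_induct) (auto simp: rrel_def dest: real_gen_pts)

lemma nmap_inv:
  assumes s: "\<sigma> \<in> nerve C n" and GF: "\<forall>f\<in>Arr C. Gm (Fm f) = f"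
  shows "nmap Gm n (nmap Fm n \<sigma>) = \<sigma>"
  using s GF unfolding nerve_def hom_def by (auto simp: nmap_def fun_eq_iff)

lemma pmap_inv:
  assumes "p \<in> real_pts C" and GF: "\<forall>f\<in>Arr C. Gm (Fm f) = f"
  shows "pmap Gm (pmap Fm p) = p"
  using assms nmap_inv by (auto simp: real_pts_def)

locale cat_iso =
  fixes C :: "('o,'m) cat" and D :: "('p,'n) cat" and Fo Fm Go Gm
  assumes F: "is_functor C D Fo Fm" and G: "is_functor D C Go Gm"
    and GF: "\<forall>f\<in>Arr C. Gm (Fm f) = f" and FG: "\<forall>g\<in>Arr D. Fm (Gm g) = g"
begin

lemma rrel_pmap: "(rrel C)\<^sup>*\<^sup>* p q \<Longrightarrow> (rrel D)\<^sup>*\<^sup>* (pmap Fm p) (pmap Fm q)"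
proof (induction rule: rtranclp_induct)
  case base then show ?case by simp
next
  case (step y z)
  then have "rrel D (pmap Fm y) (pmap Fm z)"
    using real_gen_pmap[OF F, of y z] real_gen_pmap[OF F, of z y] unfolding rrel_def by blast
  with step show ?case by (meson rtranclp.rtrancl_into_rtrancl)
qed

lemma rrel_pmap_back:
  assumes "(rrel D)\<^sup>*\<^sup>* (pmap Fm p) q'" "p \<in> real_pts C"
  shows "\<exists>q. (rrel C)\<^sup>*\<^sup>* p q \<and> q' = pmap Fm q"
  using assms(1)
proof (induction rule: rtranclp_induct)
  case base then show ?case by blast
next
  case (step y' z')
  then obtain q where q: "(rrel C)\<^sup>*\<^sup>* p q" "y' = pmap Fm q" by blast
  have qp: "q \<in> real_pts C" using rrel_pts[OF q(1) assms(2)] .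
  have z'p: "z' \<in> real_pts D" using step(2) by (auto simp: rrel_def dest: real_gen_pts)
  have "rrel C (pmap Gm y') (pmap Gm z')"
    using step(2) real_gen_pmap[OF G, of y' z'] real_gen_pmap[OF G, of z' y'] unfolding rrel_def by blast
  then have "rrel C q (pmap Gm z')" using q(2) pmap_inv[of q C Gm Fm, OF qp GF] by simp
  moreover have "z' = pmap Fm (pmap Gm z')" using pmap_inv[of z' D Fm Gm, OF z'p FG] by simp
  ultimately show ?case using q(1) by (meson rtranclp.rtrancl_into_rtrancl)
qed

lemma class_pmap:
  assumes "p \<in> real_pts C"
  shows "pmap Fm ` real_class C p = real_class D (pmap Fm p)"
proof
  show "pmap Fm ` real_class C p \<subseteq> real_class D (pmap Fm p)"
    unfolding real_class_rrel image_def using rrel_pmap by blast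
  show "real_class D (pmap Fm p) \<subseteq> pmap Fm ` real_class C p"
  proof
    fix q' assume "q' \<in> real_class D (pmap Fm p)"
    then obtain q where "(rrel C)\<^sup>*\<^sup>* p q" "q' = pmap Fm q"
      using rrel_pmap_back[OF _ assms] unfolding real_class_rrel by blast
    then show "q' \<in> pmap Fm ` real_class C p" unfolding real_class_rrel by blast
  qed
qed

lemma pts_pmap: "p \<in> real_pts C \<Longrightarrow> pmap Fm p \<in> real_pts D"
  using nerve_nmap[OF F] by (auto simp: real_pts_def)

lemma cont_pmap: "continuous_map (realization C) (realization D) (\<lambda>c. pmap Fm ` c)"
  unfolding continuous_map_def topspace_realization
proof (intro conjI Pi_I allI impI)
  fix c assume "c \<in> real_class C ` real_pts C"
  then show "pmap Fm ` c \<in> real_class D ` real_pts D" using class_pmap pts_pmap by auto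
next
  fix U assume U: "openin (realization D) U"
  show "openin (realization C) {x \<in> real_class C ` real_pts C. pmap Fm ` x \<in> U}"
    unfolding openin_realization ropen_def
  proof (intro conjI allI impI)
    show "{x \<in> real_class C ` real_pts C. pmap Fm ` x \<in> U} \<subseteq> real_class C ` real_pts C" by blast
    fix n \<sigma> assume s: "\<sigma> \<in> nerve C n"
    have "{t \<in> std_simplex n. real_class C (n, \<sigma>, t) \<in> {x \<in> real_class C ` real_pts C. pmap Fm ` x \<in> U}}
        = {t \<in> std_simplex n. real_class D (n, nmap Fm n \<sigma>, t) \<in> U}"
      using class_pmap[of "(n,\<sigma>,_)"] s by (auto simp: real_pts_def)
    moreover have "openin (simpT n) {t \<in> std_simplex n. real_class D (n, nmap Fm n \<sigma>, t) \<in> U}"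
      using U nerve_nmap[OF F s] unfolding openin_realization ropen_def by blast
    ultimately show "openin (simpT n) {t \<in> std_simplex n. real_class C (n, \<sigma>, t) \<in> {x \<in> real_class C ` real_pts C. pmap Fm ` x \<in> U}}"
      by simp
  qed
qed

end

lemma cat_iso_sym: "cat_iso C D Fo Fm Go Gm \<Longrightarrow> cat_iso D C Go Gm Fo Fm"
  by (simp add: cat_iso_def)

lemma cat_iso_aspherical:
  assumes I: "cat_iso C D Fo Fm Go Gm" and a: "aspherical_cat C"
  shows "aspherical_cat D"
proof -
  interpret I: cat_iso C D Fo Fm Go Gm by fact
  interpret J: cat_iso D C Go Gm Fo Fm by (rule cat_iso_sym) fact
  have "\<forall>y\<in>topspace (realization D). pmap Fm ` (pmap Gm ` y) = y"
  proof
    fix y assume "y \<in> topspace (realization D)"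
    then obtain p where p: "p \<in> real_pts D" "y = real_class D p" by (auto simp: topspace_realization)
    have "pmap Gm ` y = real_class C (pmap Gm p)" using J.class_pmap p by simp
    then have "pmap Fm ` (pmap Gm ` y) = real_class D (pmap Fm (pmap Gm p))"
      using I.class_pmap J.pts_pmap[OF p(1)] by simp
    then show "pmap Fm ` (pmap Gm ` y) = y" using pmap_inv[of p D Fm Gm, OF p(1) I.FG] p by simp
  qed
  then show ?thesis using a wc_transfer[OF I.cont_pmap J.cont_pmap] by (simp add: aspherical_cat_def)
qed


lemma cat_comp_hom: "category C \<Longrightarrow> f \<in> hom C x y \<Longrightarrow> g \<in> hom C y z \<Longrightarrow> Comp C g f \<in> hom C x z"
  unfolding category_def hom_def by auto

lemma cat_idm_hom: "category C \<Longrightarrow> x \<in> Obj C \<Longrightarrow> Idm C x \<in> hom C x x"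
  unfolding category_def by auto

lemma cat_idl: "category C \<Longrightarrow> f \<in> Arr C \<Longrightarrow> Comp C (Idm C (Cod C f)) f = f"
  unfolding category_def by auto

lemma cat_idr: "category C \<Longrightarrow> f \<in> Arr C \<Longrightarrow> Comp C f (Idm C (Dom C f)) = f"
  unfolding category_def by auto

lemma cat_dom_obj: "category C \<Longrightarrow> f \<in> Arr C \<Longrightarrow> Dom C f \<in> Obj C"
  unfolding category_def by auto

lemma cat_cod_obj: "category C \<Longrightarrow> f \<in> Arr C \<Longrightarrow> Cod C f \<in> Obj C"
  unfolding category_def by auto

lemma cat_assoc: "category C \<Longrightarrow> f \<in> Arr C \<Longrightarrow> g \<in> Arr C \<Longrightarrow> h \<in> Arr C \<Longrightarrow> Cod C f = Dom C g \<Longrightarrow>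
   Cod C g = Dom C h \<Longrightarrow> Comp C h (Comp C g f) = Comp C (Comp C h g) f"
  unfolding category_def by auto

locale term_cat =
  fixes C :: "('o,'m) cat" and T :: 'o
  assumes cat: "category C" and TO: "T \<in> Obj C"
    and trm: "\<forall>x\<in>Obj C. \<exists>!f. f \<in> hom C x T"
begin

definition tarr :: "'o \<Rightarrow> 'm" where "tarr x = (THE f. f \<in> hom C x T)"

lemma tarr_hom: "x \<in> Obj C \<Longrightarrow> tarr x \<in> hom C x T"
  unfolding tarr_def using trm by (metis theI')

lemma tarr_uniq: "x \<in> Obj C \<Longrightarrow> f \<in> hom C x T \<Longrightarrow> f = tarr x"
  using trm tarr_hom by blast

definition ext :: "(nat \<Rightarrow> nat \<Rightarrow> 'm) \<Rightarrow> nat \<Rightarrow> (nat \<Rightarrow> nat \<Rightarrow> 'm)" where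
  "ext \<sigma> n = (\<lambda>i j. if i \<le> j \<and> j \<le> n then \<sigma> i j
      else if j = Suc n \<and> i \<le> n then tarr (Dom C (\<sigma> i i))
      else if i = Suc n \<and> j = Suc n then Idm C T else undefined)"

lemma ext_nerve:
  assumes s: "\<sigma> \<in> nerve C n"
  shows "ext \<sigma> n \<in> nerve C (Suc n)"
proof -
  define vx where "vx i = (if i \<le> n then Dom C (\<sigma> i i) else T)" for i
  have vxo: "vx i \<in> Obj C" for i using s TO by (auto simp: vx_def nerve_def)
  have IT: "Idm C T \<in> hom C T T" using cat_idm_hom[OF cat TO] .
  have IT2: "Idm C T = tarr T" using tarr_uniq[OF TO IT] .
  have eS: "i \<le> Suc n \<Longrightarrow> ext \<sigma> n i (Suc n) = tarr (vx i)" for i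
    using IT2 by (auto simp: ext_def vx_def)
  have h: "i \<le> j \<Longrightarrow> j \<le> Suc n \<Longrightarrow> ext \<sigma> n i j \<in> hom C (vx i) (vx j)" for i j
  proof (cases "j \<le> n")
    case True
    assume "i \<le> j"
    then show ?thesis using s True by (auto simp: ext_def vx_def nerve_def)
  next
    case False
    assume "i \<le> j" "j \<le> Suc n"
    then have "j = Suc n" using False by simp
    then show ?thesis using eS[of i] tarr_hom[OF vxo[of i]] \<open>i \<le> j\<close> by (simp add: vx_def)
  qed
  have ii: "i \<le> Suc n \<Longrightarrow> ext \<sigma> n i i = Idm C (vx i)" for i
    using s IT2 by (auto simp: ext_def vx_def nerve_def)
  have dii: "i \<le> Suc n \<Longrightarrow> Dom C (ext \<sigma> n i i) = vx i" for i
    using h[of i i] by (simp add: hom_def)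
  show ?thesis
    unfolding nerve_def mem_Collect_eq
  proof (intro conjI allI impI)
    fix i assume i: "i \<le> Suc n"
    show "Dom C (ext \<sigma> n i i) \<in> Obj C" using dii[OF i] vxo by simp
    show "ext \<sigma> n i i = Idm C (Dom C (ext \<sigma> n i i))" using dii[OF i] ii[OF i] by simp
  next
    fix i j assume "i \<le> j \<and> j \<le> Suc n"
    then show "ext \<sigma> n i j \<in> hom C (Dom C (ext \<sigma> n i i)) (Dom C (ext \<sigma> n j j))"
      using h dii by simp
  next
    fix i j k assume ijk: "i \<le> j \<and> j \<le> k \<and> k \<le> Suc n"
    show "Comp C (ext \<sigma> n j k) (ext \<sigma> n i j) = ext \<sigma> n i k"
    proof (cases "k \<le> n")
      case True
      then have "Comp C (\<sigma> j k) (\<sigma> i j) = \<sigma> i k" using s ijk by (auto simp: nerve_def)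
      then show ?thesis using True ijk by (simp add: ext_def)
    next
      case False
      then have k: "k = Suc n" using ijk by simp
      have "Comp C (ext \<sigma> n j k) (ext \<sigma> n i j) \<in> hom C (vx i) (vx k)"
        using cat_comp_hom[OF cat h[of i j] h[of j k]] ijk by simp
      then have "Comp C (ext \<sigma> n j k) (ext \<sigma> n i j) = tarr (vx i)"
        using tarr_uniq[OF vxo] k by (simp add: vx_def)
      then show ?thesis using eS[of i] k ijk by simp
    qed
  next
    fix i j assume "\<not> (i \<le> j \<and> j \<le> Suc n)"
    then show "ext \<sigma> n i j = undefined" by (auto simp: ext_def)
  qed
qed

definition push :: "real \<Rightarrow> (nat \<Rightarrow> real) \<Rightarrow> nat \<Rightarrow> (nat \<Rightarrow> real)" where
  "push s t n = (\<lambda>k. if k \<le> n then (1 - s) * t k else if k = Suc n then s else 0)"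

lemma push_simplex:
  assumes t: "t \<in> std_simplex n" and s: "0 \<le> s" "s \<le> 1"
  shows "push s t n \<in> std_simplex (Suc n)"
proof -
  have "(\<Sum>k\<le>Suc n. push s t n k) = (\<Sum>k\<le>n. (1 - s) * t k) + s"
    by (simp add: push_def)
  also have "\<dots> = (1 - s) * (\<Sum>k\<le>n. t k) + s" by (simp add: sum_distrib_left)
  also have "\<dots> = 1" using t by (simp add: std_simplex_def)
  finally show ?thesis using t s unfolding std_simplex_def push_def by auto
qed

definition cone :: "real \<Rightarrow> 'm rpt \<Rightarrow> 'm rpt" where
  "cone s p = (Suc (fst p), ext (fst (snd p)) (fst p), push s (snd (snd p)) (fst p))"

lemma cone_simp[simp]: "cone s (n, \<sigma>, t) = (Suc n, ext \<sigma> n, push s t n)"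
  by (simp add: cone_def)

lemma cone_pts: "p \<in> real_pts C \<Longrightarrow> 0 \<le> s \<Longrightarrow> s \<le> 1 \<Longrightarrow> cone s p \<in> real_pts C"
  using ext_nerve push_simplex by (auto simp: real_pts_def)

lemma gen_cone:
  assumes g: "real_gen C p q" and s: "0 \<le> s" "s \<le> 1"
  shows "real_gen C (cone s p) (cone s q)"
proof -
  obtain m n \<sigma> \<theta> u where p: "p = (m, simp_face \<sigma> \<theta> m, u)" and q: "q = (n, \<sigma>, simp_push \<theta> m n u)"
    and sn: "\<sigma> \<in> nerve C n" and th: "mono_map m n \<theta>" and us: "u \<in> std_simplex m"
    using g unfolding real_gen_def by blast
  define \<theta>' where "\<theta>' = \<theta>(Suc m := Suc n)"
  have thn: "i \<le> m \<Longrightarrow> \<theta> i \<le> n" for i using th by (simp add: mono_map_def)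
  have th': "mono_map (Suc m) (Suc n) \<theta>'"
    using th unfolding mono_map_def \<theta>'_def
    by (auto simp: le_Suc_eq)
  have e1: "ext (simp_face \<sigma> \<theta> m) m = simp_face (ext \<sigma> n) \<theta>' (Suc m)"
  proof (intro ext allI)
    fix i j
    show "ext (simp_face \<sigma> \<theta> m) m i j = simp_face (ext \<sigma> n) \<theta>' (Suc m) i j"
    proof (cases "i \<le> j \<and> j \<le> m")
      case True
      then have "\<theta> i \<le> \<theta> j" "\<theta> j \<le> n" using th by (auto simp: mono_map_def)
      then show ?thesis using True by (simp add: ext_def simp_face_def \<theta>'_def)
    next
      case False
      show ?thesis
      proof (cases "j = Suc m \<and> i \<le> m")
        case True
        then show ?thesis using thn[of i] by (simp add: ext_def simp_face_def \<theta>'_def)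
      next
        case False2: False
        then show ?thesis using False by (auto simp: ext_def simp_face_def \<theta>'_def)
      qed
    qed
  qed
  have e2: "push s (simp_push \<theta> m n u) n = simp_push \<theta>' (Suc m) (Suc n) (push s u m)"
  proof (intro ext)
    fix k
    show "push s (simp_push \<theta> m n u) n k = simp_push \<theta>' (Suc m) (Suc n) (push s u m) k"
    proof (cases "k \<le> n")
      case True
      have "{i. i \<le> Suc m \<and> \<theta>' i = k} = {i. i \<le> m \<and> \<theta> i = k}"
        using True by (auto simp: \<theta>'_def le_Suc_eq)
      moreover have "(\<Sum>i\<in>{i. i \<le> m \<and> \<theta> i = k}. push s u m i) = (\<Sum>i\<in>{i. i \<le> m \<and> \<theta> i = k}. (1 - s) * u i)"
        by (rule sum.cong) (auto simp: push_def)
      ultimately show ?thesis using True by (simp add: push_def simp_push_def sum_distrib_left)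
    next
      case False
      show ?thesis
      proof (cases "k = Suc n")
        case True
        have "{i. i \<le> Suc m \<and> \<theta>' i = k} = {Suc m}"
          using True thn by (auto simp: \<theta>'_def le_Suc_eq) (metis Suc_n_not_le_n)
        then show ?thesis using True by (simp add: push_def simp_push_def)
      next
        case False2: False
        then show ?thesis using False by (simp add: push_def simp_push_def)
      qed
    qed
  qed
  show ?thesis unfolding real_gen_def
    apply (rule exI[of _ "Suc m"], rule exI[of _ "Suc n"], rule exI[of _ "ext \<sigma> n"], rule exI[of _ \<theta>'],
        rule exI[of _ "push s u m"])
    using p q e1 e2 ext_nerve[OF sn] th' push_simplex[OF us s] by simp
qed

lemma rrel_cone: "(rrel C)\<^sup>*\<^sup>* p q \<Longrightarrow> 0 \<le> s \<Longrightarrow> s \<le> 1 \<Longrightarrow> (rrel C)\<^sup>*\<^sup>* (cone s p) (cone s q)"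
proof (induction rule: rtranclp_induct)
  case base then show ?case by simp
next
  case (step y z)
  then have "rrel C (cone s y) (cone s z)"
    using gen_cone[of y z s] gen_cone[of z y s] unfolding rrel_def by blast
  with step show ?case by (meson rtranclp.rtrancl_into_rtrancl)
qed

lemma cone0: assumes "p \<in> real_pts C" shows "real_class C (cone 0 p) = real_class C p"
proof -
  obtain n \<sigma> t where p: "p = (n, \<sigma>, t)" "\<sigma> \<in> nerve C n" "t \<in> std_simplex n"
    using assms by (auto simp: real_pts_def)
  have th: "mono_map n (Suc n) (\<lambda>i. i)" by (simp add: mono_map_def)
  have e1: "simp_face (ext \<sigma> n) (\<lambda>i. i) n = \<sigma>"
    using p(2) by (auto simp: simp_face_def ext_def nerve_def fun_eq_iff)
  have e2: "simp_push (\<lambda>i. i) n (Suc n) t = push 0 t n"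
  proof (intro ext)
    fix k
    show "simp_push (\<lambda>i. i) n (Suc n) t k = push 0 t n k"
    proof (cases "k \<le> n")
      case True
      then have "{i. i \<le> n \<and> i = k} = {k}" by auto
      then show ?thesis using True unfolding simp_push_def push_def by (simp only:) simp
    next
      case False
      then have "{i. i \<le> n \<and> i = k} = {}" by auto
      then show ?thesis using False unfolding simp_push_def push_def by (simp only:) simp
    qed
  qed
  have "real_gen C p (cone 0 p)"
    unfolding real_gen_def
    apply (rule exI[of _ n], rule exI[of _ "Suc n"], rule exI[of _ "ext \<sigma> n"], rule exI[of _ "\<lambda>i. i"],
        rule exI[of _ t])
    using p e1 e2 ext_nerve[OF p(2)] th by simp
  then show ?thesis using real_class_eqI by metis
qed

definition \<sigma>T :: "nat \<Rightarrow> nat \<Rightarrow> 'm" where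
  "\<sigma>T = (\<lambda>i j. if i \<le> j \<and> j \<le> 0 then Idm C T else undefined)"
definition e0 :: "nat \<Rightarrow> real" where "e0 = (\<lambda>k. if k = 0 then 1 else 0)"
definition pT :: "'m rpt" where "pT = (0, \<sigma>T, e0)"

lemma pT_pts: "pT \<in> real_pts C"
proof -
  have IT: "Idm C T \<in> hom C T T" using cat_idm_hom[OF cat TO] .
  then have "Comp C (Idm C T) (Idm C T) = Idm C T" using cat_idl[OF cat, of "Idm C T"] by (auto simp: hom_def)
  then have "\<sigma>T \<in> nerve C 0" using IT TO by (auto simp: nerve_def \<sigma>T_def hom_def)
  moreover have "e0 \<in> std_simplex 0" by (auto simp: std_simplex_def e0_def)
  ultimately show ?thesis by (simp add: pT_def real_pts_def)
qed

lemma cone1: assumes "p \<in> real_pts C" shows "real_class C (cone 1 p) = real_class C pT"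
proof -
  obtain n \<sigma> t where p: "p = (n, \<sigma>, t)" "\<sigma> \<in> nerve C n" "t \<in> std_simplex n"
    using assms by (auto simp: real_pts_def)
  have th: "mono_map 0 (Suc n) (\<lambda>i. Suc n)" by (simp add: mono_map_def)
  have e1: "simp_face (ext \<sigma> n) (\<lambda>i. Suc n) 0 = \<sigma>T"
    by (auto simp: simp_face_def ext_def \<sigma>T_def fun_eq_iff)
  have e2: "simp_push (\<lambda>i. Suc n) 0 (Suc n) e0 = push 1 t n"
  proof (intro ext)
    fix k
    have "k = Suc n \<Longrightarrow> {i::nat. i \<le> 0 \<and> Suc n = k} = {0}" by auto
    moreover have "k \<noteq> Suc n \<Longrightarrow> {i. i \<le> (0::nat) \<and> Suc n = k} = {}" by auto
    ultimately show "simp_push (\<lambda>i. Suc n) 0 (Suc n) e0 k = push 1 t n k"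
      unfolding simp_push_def push_def by (cases "k = Suc n") (auto simp: e0_def)
  qed
  have "e0 \<in> std_simplex 0" by (auto simp: std_simplex_def e0_def)
  then have "real_gen C pT (cone 1 p)"
    unfolding real_gen_def
    apply (rule_tac exI[of _ 0], rule_tac exI[of _ "Suc n"], rule_tac exI[of _ "ext \<sigma> n"],
        rule_tac exI[of _ "\<lambda>i. Suc n"], rule_tac exI[of _ e0])
    using p e1 e2 ext_nerve[OF p(2)] th by (simp add: pT_def)
  then show ?thesis using real_class_eqI by metis
qed

end


context term_cat begin

definition Hc :: "real \<times> 'm rpt set \<Rightarrow> 'm rpt set" where
  "Hc x = real_class C (cone (fst x) (SOME p. p \<in> snd x))"

lemma Hc_class:
  assumes "0 \<le> s" "s \<le> 1"
  shows "Hc (s, real_class C p) = real_class C (cone s p)"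
proof -
  have pp: "p \<in> real_class C p" by (simp add: real_class_rrel)
  define q where "q = (SOME q. q \<in> real_class C p)"
  have "q \<in> real_class C p" unfolding q_def using pp by (rule someI)
  then have "(rrel C)\<^sup>*\<^sup>* p q" by (simp add: real_class_rrel)
  then have "(rrel C)\<^sup>*\<^sup>* (cone s p) (cone s q)" using rrel_cone assms by blast
  then have "real_class C (cone s p) = real_class C (cone s q)" by (simp add: real_class_eq_iff)
  then show ?thesis by (simp add: Hc_def q_def)
qed

lemma topspace_simpT[simp]: "topspace (simpT n) = std_simplex n"
  by simp

lemma phi_cont:
  "continuous_map (prod_topology (top_of_set {0..1}) (simpT m)) (simpT (Suc m)) (\<lambda>x. push (fst x) (snd x) m)"
  unfolding continuous_map_in_subtopology
proof
  let ?P = "prod_topology (top_of_set {0..1::real}) (simpT m)"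
  have cf: "continuous_map ?P euclideanreal fst"
    using continuous_map_fst continuous_map_into_fulltopology by blast
  have cs: "continuous_map ?P euclideanreal (\<lambda>x. snd x k)" for k
  proof -
    have "continuous_map (simpT m) euclideanreal (\<lambda>t. t k)"
      by (intro continuous_map_from_subtopology continuous_map_product_projection) simp
    then show ?thesis using continuous_map_compose[OF continuous_map_snd] by (simp add: o_def)
  qed
  show "continuous_map ?P (powertop_real UNIV) (\<lambda>x. push (fst x) (snd x) m)"
    unfolding continuous_map_componentwise_UNIV
  proof
    fix k
    show "continuous_map ?P euclideanreal (\<lambda>x. push (fst x) (snd x) m k)"
    proof (cases "k \<le> m")
      case True
      have "continuous_map ?P euclideanreal (\<lambda>x. (1 - fst x) * snd x k)"
        by (intro continuous_map_real_mult continuous_map_diff cf cs continuous_map_canonical_const)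
      then show ?thesis using True by (simp add: push_def)
    next
      case False
      then show ?thesis using cf by (cases "k = Suc m") (simp_all add: push_def)
    qed
  qed
  show "(\<lambda>x. push (fst x) (snd x) m) \<in> topspace ?P \<rightarrow> std_simplex (Suc m)"
    using push_simplex by auto
qed

definition Gs :: "nat \<Rightarrow> (nat \<Rightarrow> nat \<Rightarrow> 'm) \<Rightarrow> 'm rpt set set \<Rightarrow> (real \<times> (nat \<Rightarrow> real)) set" where
  "Gs m \<tau> U = {x \<in> {0..1} \<times> std_simplex m. real_class C (Suc m, ext \<tau> m, push (fst x) (snd x) m) \<in> U}"

lemma Gs_open:
  assumes \<tau>: "\<tau> \<in> nerve C m" and U: "openin (realization C) U"
  shows "openin (prod_topology (top_of_set {0..1}) (simpT m)) (Gs m \<tau> U)"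
proof -
  have O: "openin (simpT (Suc m)) {t \<in> std_simplex (Suc m). real_class C (Suc m, ext \<tau> m, t) \<in> U}"
    using U ext_nerve[OF \<tau>] unfolding openin_realization ropen_def by blast
  have "openin (prod_topology (top_of_set {0..1}) (simpT m))
     {x \<in> topspace (prod_topology (top_of_set {0..1}) (simpT m)).
        push (fst x) (snd x) m \<in> {t \<in> std_simplex (Suc m). real_class C (Suc m, ext \<tau> m, t) \<in> U}}"
    by (rule openin_continuous_map_preimage[OF phi_cont O])
  moreover have "{x \<in> topspace (prod_topology (top_of_set {0..1}) (simpT m)).
        push (fst x) (snd x) m \<in> {t \<in> std_simplex (Suc m). real_class C (Suc m, ext \<tau> m, t) \<in> U}}
      = Gs m \<tau> U"
    unfolding Gs_def using push_simplex by auto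
  ultimately show ?thesis by simp
qed

lemma Hc_cont:
  "continuous_map (prod_topology (top_of_set {0..1}) (realization C)) (realization C) Hc"
  unfolding continuous_map_def
proof (intro conjI allI impI Pi_I)
  fix x assume "x \<in> topspace (prod_topology (top_of_set {0..1::real}) (realization C))"
  then obtain s p where x: "x = (s, real_class C p)" "s \<in> {0..1}" "p \<in> real_pts C"
    by (auto simp: topspace_realization)
  then show "Hc x \<in> topspace (realization C)"
    using Hc_class cone_pts by (auto simp: topspace_realization)
next
  fix U assume U: "openin (realization C) U"
  let ?Q = "real_class C ` real_pts C"
  let ?S = "{x \<in> topspace (prod_topology (top_of_set {0..1::real}) (realization C)). Hc x \<in> U}"
  show "openin (prod_topology (top_of_set {0..1}) (realization C)) ?S"
    unfolding openin_prod_topology_alt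
  proof (intro allI impI)
    fix s0 c0 assume sc: "(s0, c0) \<in> ?S"
    then obtain n \<sigma> t0 where c0: "c0 = real_class C (n, \<sigma>, t0)" and sn: "\<sigma> \<in> nerve C n"
      and t0: "t0 \<in> std_simplex n" and s0: "s0 \<in> {0..1}"
      by (auto simp: topspace_realization real_pts_def)
    define Sl where "Sl = {s \<in> topspace (top_of_set {0..1::real}). (\<lambda>s. (s, t0)) s \<in> Gs n \<sigma> U}"
    have cp: "continuous_map (top_of_set {0..1::real}) (prod_topology (top_of_set {0..1}) (simpT n)) (\<lambda>s. (s, t0))"
      using t0 by (intro continuous_map_pairedI) (auto simp: continuous_map_id[unfolded id_def])
    have "openin (top_of_set {0..1}) Sl"
      unfolding Sl_def by (rule openin_continuous_map_preimage[OF cp Gs_open[OF sn U]])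
    moreover have "s0 \<in> Sl"
      using sc s0 t0 Hc_class[of s0 "(n,\<sigma>,t0)"] c0 by (auto simp: Sl_def Gs_def)
    ultimately obtain e where e: "e > 0" "\<forall>x'\<in>{0..1}. dist x' s0 < e \<longrightarrow> x' \<in> Sl"
      unfolding openin_euclidean_subtopology_iff by blast
    define K where "K = cball s0 (e/2) \<inter> {0..1::real}"
    define V where "V = {0..1::real} \<inter> ball s0 (e/2)"
    define W where "W = {c \<in> ?Q. \<forall>s\<in>K. Hc (s, c) \<in> U}"
    have KI: "K \<subseteq> {0..1}" by (auto simp: K_def)
    have Kc: "compactin (top_of_set {0..1}) K"
      unfolding compactin_subtopology compactin_euclidean_iff K_def by auto
    have "openin (top_of_set {0..1}) V" unfolding V_def by (intro openin_open_Int) simp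
    moreover have "s0 \<in> V" using s0 e by (simp add: V_def)
    moreover have "c0 \<in> W"
    proof -
      have "c0 \<in> ?Q" using c0 sn t0 by (auto simp: real_pts_def)
      moreover have "Hc (s, c0) \<in> U" if s: "s \<in> K" for s
      proof -
        have "s \<in> {0..1}" "dist s s0 < e" using s e by (auto simp: K_def dist_commute)
        then have "s \<in> Sl" using e by blast
        then show ?thesis using Hc_class[of s "(n,\<sigma>,t0)"] c0 by (auto simp: Sl_def Gs_def)
      qed
      ultimately show ?thesis by (simp add: W_def)
    qed
    moreover have "V \<times> W \<subseteq> ?S"
    proof
      fix x assume "x \<in> V \<times> W"
      then obtain s c where x: "x = (s, c)" "s \<in> V" "c \<in> W" by blast
      then have "s \<in> K" "s \<in> {0..1}" by (auto simp: V_def K_def)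
      then show "x \<in> ?S" using x by (auto simp: W_def topspace_realization)
    qed
    moreover have "openin (realization C) W"
      unfolding openin_realization ropen_def
    proof (intro conjI allI impI)
      show "W \<subseteq> ?Q" by (auto simp: W_def)
      fix m \<tau> assume \<tau>: "\<tau> \<in> nerve C m"
      let ?Z = "{t \<in> std_simplex m. real_class C (m, \<tau>, t) \<in> W}"
      have Zeq: "?Z = {t \<in> std_simplex m. \<forall>s\<in>K. (s, t) \<in> Gs m \<tau> U}"
      proof -
        have "real_class C (m, \<tau>, t) \<in> W \<longleftrightarrow> (\<forall>s\<in>K. (s, t) \<in> Gs m \<tau> U)" if t: "t \<in> std_simplex m" for t
        proof -
          have "real_class C (m, \<tau>, t) \<in> ?Q" using t \<tau> by (auto simp: real_pts_def)
          moreover have "Hc (s, real_class C (m, \<tau>, t)) = real_class C (Suc m, ext \<tau> m, push s t m)"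
            if "s \<in> K" for s
            using Hc_class[of s "(m,\<tau>,t)"] KI that by auto
          ultimately show ?thesis using t KI by (auto simp: W_def Gs_def)
        qed
        then show ?thesis by auto
      qed
      show "openin (simpT m) ?Z"
        unfolding Zeq
      proof (subst openin_subopen, intro ballI)
        fix t1 assume t1: "t1 \<in> {t \<in> std_simplex m. \<forall>s\<in>K. (s, t) \<in> Gs m \<tau> U}"
        have "K \<times> {t1} \<subseteq> Gs m \<tau> U" using t1 by auto
        then obtain U' V' where UV: "openin (top_of_set {0..1}) U'" "openin (simpT m) V'" "K \<subseteq> U'" "t1 \<in> V'"
          "U' \<times> V' \<subseteq> Gs m \<tau> U"
          using tube_lemma_left[OF Gs_open[OF \<tau> U] Kc, of t1] t1 by auto
        have "V' \<subseteq> {t \<in> std_simplex m. \<forall>s\<in>K. (s, t) \<in> Gs m \<tau> U}"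
          using UV openin_subset[OF UV(2)] by auto
        then show "\<exists>T. openin (simpT m) T \<and> t1 \<in> T \<and> T \<subseteq> {t \<in> std_simplex m. \<forall>s\<in>K. (s, t) \<in> Gs m \<tau> U}"
          using UV by blast
      qed
    qed
    ultimately show "\<exists>U' V'. openin (top_of_set {0..1}) U' \<and> openin (realization C) V' \<and> s0 \<in> U' \<and> c0 \<in> V' \<and> U' \<times> V' \<subseteq> ?S"
      by blast
  qed
qed

lemma contractible: "contractible_space (realization C)"
  unfolding contractible_space_def
proof (rule exI[of _ "real_class C pT"])
  show "homotopic_with (\<lambda>x. True) (realization C) (realization C) id (\<lambda>x. real_class C pT)"
    unfolding homotopic_with[where P="\<lambda>x. True", simplified]
  proof (intro exI conjI ballI)
    show "continuous_map (prod_topology (top_of_set {0..1}) (realization C)) (realization C) Hc"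
      by (rule Hc_cont)
  next
    fix x assume "x \<in> topspace (realization C)"
    then obtain p where p: "p \<in> real_pts C" "x = real_class C p" by (auto simp: topspace_realization)
    show "Hc (0, x) = id x" using Hc_class[of 0 p] cone0[OF p(1)] p by simp
    show "Hc (1, x) = real_class C pT" using Hc_class[of 1 p] cone1[OF p(1)] p by simp
  qed
qed

lemma aspherical: "aspherical_cat C"
  unfolding aspherical_cat_def
  by (rule wc_contractible[OF contractible]) (use pT_pts in \<open>auto simp: topspace_realization\<close>)

end


lemma elements_category:
  assumes A: "category A" and X: "presheaf A X"
  shows "category (elements A X)"
proof -
  note pd = X[unfolded presheaf_def]
  show ?thesis
    unfolding category_def elements_def hom_def
    using A pd
    apply (simp add: split_beta)
    apply (intro conjI ballI allI impI)
    by (auto simp: category_def hom_def)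
qed

lemma yo_presheaf:
  assumes A: "category A" and a: "a \<in> Obj A"
  shows "presheaf A (yo A a)"
  unfolding presheaf_def yo_def using A
  apply (simp)
  apply (intro conjI ballI allI impI)
  by (auto simp: category_def hom_def)

lemma yo_term:
  assumes A: "category A" and a: "a \<in> Obj A"
  shows "term_cat (elements A (yo A a)) (a, Idm A a)"
  unfolding term_cat_def
proof (intro conjI ballI)
  show "category (elements A (yo A a))" by (rule elements_category[OF A yo_presheaf[OF A a]])
  show "(a, Idm A a) \<in> Obj (elements A (yo A a))"
    using A a by (simp add: elements_def yo_def category_def)
  fix x assume x: "x \<in> Obj (elements A (yo A a))"
  then obtain y g where xg: "x = (y, g)" "y \<in> Obj A" "g \<in> hom A y a"
    by (auto simp: elements_def yo_def split: if_splits)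
  have g: "g \<in> Arr A" "Dom A g = y" "Cod A g = a" using xg by (auto simp: hom_def)
  show "\<exists>!f. f \<in> hom (elements A (yo A a)) x (a, Idm A a)"
  proof (rule ex1I[of _ "(g, Idm A a)"])
    show "(g, Idm A a) \<in> hom (elements A (yo A a)) x (a, Idm A a)"
      using A g xg a cat_idl[OF A g(1)] cat_idm_hom[OF A a]
      by (auto simp: hom_def elements_def yo_def cat_dom_obj)
  next
    fix f assume f: "f \<in> hom (elements A (yo A a)) x (a, Idm A a)"
    then obtain h w where hw: "f = (h, w)" "h \<in> Arr A" by (auto simp: hom_def elements_def)
    then have "w = Idm A a" "Cod A h = a" using f by (auto simp: hom_def elements_def)
    moreover have "Dom A h = y" "snd (yo A a) h w = g" using f hw xg by (auto simp: hom_def elements_def)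
    ultimately have "h = g" using cat_idl[OF A hw(2)] hw cat_idm_hom[OF A a]
      by (auto simp: yo_def hom_def)
    then show "f = (g, Idm A a)" using hw \<open>w = Idm A a\<close> by simp
  qed
qed

lemma full_sub_simps[simp]:
  "Obj (full_sub C S) = S"
  "Arr (full_sub C S) = {f \<in> Arr C. Dom C f \<in> S \<and> Cod C f \<in> S}"
  "Dom (full_sub C S) = Dom C" "Cod (full_sub C S) = Cod C"
  "Idm (full_sub C S) = Idm C" "Comp (full_sub C S) = Comp C"
  by (simp_all add: full_sub_def)

lemma hom_full_sub: "x \<in> S \<Longrightarrow> y \<in> S \<Longrightarrow> hom (full_sub C S) x y = hom C x y"
  by (auto simp: hom_def)

lemma hom_psh: "\<tau> \<in> hom (psh_cat A) Y X \<longleftrightarrow>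
   (\<exists>\<eta>. \<tau> = (Y, X, \<eta>) \<and> presheaf A Y \<and> presheaf A X \<and> \<eta> \<in> nt_hom A Y X)"
  by (auto simp: hom_def psh_cat_def)

lemma comp_psh: "Comp (psh_cat A) t s = (fst s, fst (snd t), nt_comp A (fst s) (snd (snd t)) (snd (snd s)))"
  by (simp add: psh_cat_def)


locale yon =
  fixes A :: "('o,'m) cat" and X :: "('o,'m) pshA" and S :: "('o,'m) pshA set"
  assumes A: "category A" and X: "presheaf A X" and XS: "X \<in> S"
    and yoS: "yo A ` Obj A \<subseteq> S" and Spsh: "\<forall>Y\<in>S. presheaf A Y"
begin

abbreviation "Cc \<equiv> full_sub (psh_cat A) S"
abbreviation "PP \<equiv> pull_hom A Cc (yo A) (yo_arr A) X"

definition ynt :: "'m \<Rightarrow> 'o \<Rightarrow> 'm \<Rightarrow> 'm" where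
  "ynt f = (\<lambda>x g. if x \<in> Obj A \<and> g \<in> hom A x (Dom A f) then Comp A f g else undefined)"

lemma yo_arr_eq: "yo_arr A f = (yo A (Dom A f), yo A (Cod A f), ynt f)"
  by (simp add: yo_arr_def ynt_def)

definition vnt :: "'o \<Rightarrow> 'm \<Rightarrow> 'o \<Rightarrow> 'm \<Rightarrow> 'm" where
  "vnt x v = (\<lambda>y g. if y \<in> Obj A \<and> g \<in> hom A y x then snd X g v else undefined)"

definition tau :: "'o \<Rightarrow> 'm \<Rightarrow> ('o,'m) pshA_arr" where
  "tau x v = (yo A x, X, vnt x v)"

lemma yo_fst: "x \<in> Obj A \<Longrightarrow> fst (yo A a) x = hom A x a"
  by (simp add: yo_def)

lemma memP: "x \<in> Obj A \<Longrightarrow> \<tau> \<in> fst PP x \<longleftrightarrow> (\<exists>\<eta>. \<tau> = (yo A x, X, \<eta>) \<and> \<eta> \<in> nt_hom A (yo A x) X)"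
  using yoS XS X yo_presheaf[OF A] by (auto simp: pull_hom_def hom_full_sub hom_psh)

lemma Y1:
  assumes x: "x \<in> Obj A" and \<eta>: "\<eta> \<in> nt_hom A (yo A x) X" and g: "g \<in> hom A y x"
  shows "\<eta> y g = snd X g (\<eta> x (Idm A x))"
proof -
  have ga: "g \<in> Arr A" "Dom A g = y" "Cod A g = x" using g by (auto simp: hom_def)
  have "Idm A x \<in> fst (yo A x) (Cod A g)" using ga x cat_idm_hom[OF A x] by (simp add: yo_fst)
  then have "\<eta> (Dom A g) (snd (yo A x) g (Idm A x)) = snd X g (\<eta> (Cod A g) (Idm A x))"
    using \<eta> ga by (auto simp: nt_hom_def)
  moreover have "snd (yo A x) g (Idm A x) = g"
    using ga x cat_idm_hom[OF A x] cat_idl[OF A ga(1)] by (simp add: yo_def)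
  ultimately show ?thesis using ga by simp
qed

lemma Y2:
  assumes x: "x \<in> Obj A" and \<eta>: "\<eta> \<in> nt_hom A (yo A x) X"
  shows "vnt x (\<eta> x (Idm A x)) = \<eta>"
proof (intro ext)
  fix y g
  show "vnt x (\<eta> x (Idm A x)) y g = \<eta> y g"
  proof (cases "y \<in> Obj A \<and> g \<in> hom A y x")
    case True
    then show ?thesis using Y1[OF x \<eta>, of g y] by (simp add: vnt_def)
  next
    case False
    then have "\<not> (y \<in> Obj A \<and> g \<in> fst (yo A x) y)" by (auto simp: yo_def)
    then have "\<eta> y g = undefined" using \<eta> by (auto simp: nt_hom_def)
    then show ?thesis using False unfolding vnt_def by auto
  qed
qed

lemma Y3:
  assumes x: "x \<in> Obj A" and v: "v \<in> fst X x"
  shows "vnt x v \<in> nt_hom A (yo A x) X"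
  unfolding nt_hom_def mem_Collect_eq
proof (intro conjI ballI allI impI)
  note pd = X[unfolded presheaf_def]
  fix y g assume y: "y \<in> Obj A" and g: "g \<in> fst (yo A x) y"
  then have "g \<in> hom A y x" by (simp add: yo_def)
  then show "vnt x v y g \<in> fst X y" using pd v y by (auto simp: vnt_def hom_def)
next
  note pd = X[unfolded presheaf_def]
  fix f g assume f: "f \<in> Arr A" and g: "g \<in> fst (yo A x) (Cod A f)"
  have co: "Cod A f \<in> Obj A" "Dom A f \<in> Obj A" using A f by (auto simp: category_def)
  then have gh: "g \<in> hom A (Cod A f) x" using g by (simp add: yo_def)
  then have ga: "g \<in> Arr A" "Dom A g = Cod A f" "Cod A g = x" by (auto simp: hom_def)
  have cgf: "Comp A g f \<in> hom A (Dom A f) x" using cat_comp_hom[OF A _ gh, of f "Dom A f"] f by (simp add: hom_def)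
  have "snd (yo A x) f g = Comp A g f" using f gh by (simp add: yo_def)
  then have "vnt x v (Dom A f) (snd (yo A x) f g) = snd X (Comp A g f) v"
    using cgf co by (simp add: vnt_def)
  also have "\<dots> = snd X f (snd X g v)" using pd f ga v by auto
  also have "\<dots> = snd X f (vnt x v (Cod A f) g)" using gh co by (simp add: vnt_def)
  finally show "vnt x v (Dom A f) (snd (yo A x) f g) = snd X f (vnt x v (Cod A f) g)" .
next
  fix y g assume "\<not> (y \<in> Obj A \<and> g \<in> fst (yo A x) y)"
  then show "vnt x v y g = undefined" by (auto simp: vnt_def yo_def)
qed

lemma Y4: "x \<in> Obj A \<Longrightarrow> v \<in> fst X x \<Longrightarrow> vnt x v x (Idm A x) = v"
  using X cat_idm_hom[OF A] by (auto simp: vnt_def presheaf_def)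

lemma actP:
  assumes f: "f \<in> Arr A" and \<eta>: "\<eta> \<in> nt_hom A (yo A (Cod A f)) X"
  shows "snd PP f (yo A (Cod A f), X, \<eta>) = (yo A (Dom A f), X, nt_comp A (yo A (Dom A f)) \<eta> (ynt f))"
proof -
  have co: "Cod A f \<in> Obj A" using A f by (auto simp: category_def)
  have "(yo A (Cod A f), X, \<eta>) \<in> hom Cc (yo A (Cod A f)) X"
    using memP[OF co] \<eta> co by (simp add: pull_hom_def)
  then show ?thesis using f by (simp add: pull_hom_def comp_psh yo_arr_eq)
qed

definition "Go = (\<lambda>(x, v). (x, tau x v))"
definition "Gm = (\<lambda>(f, v). (f, tau (Cod A f) v))"
definition "Fo = (\<lambda>(x, \<tau>::('o,'m) pshA_arr). (x, snd (snd \<tau>) x (Idm A x)))"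
definition "Fm = (\<lambda>(f, \<tau>::('o,'m) pshA_arr). (f, snd (snd \<tau>) (Cod A f) (Idm A (Cod A f))))"

lemma el_simps:
  "Obj (elements A Y) = {(x, v). x \<in> Obj A \<and> v \<in> fst Y x}"
  "Arr (elements A Y) = {(f, v). f \<in> Arr A \<and> v \<in> fst Y (Cod A f)}"
  "Dom (elements A Y) (f, v) = (Dom A f, snd Y f v)"
  "Cod (elements A Y) (f, v) = (Cod A f, v)"
  "Idm (elements A Y) (x, v) = (Idm A x, v)"
  "Comp (elements A Y) (g, w) (f, v) = (Comp A g f, w)"
  by (simp_all add: elements_def)

lemma NC:
  assumes h: "h \<in> Arr A" and v: "v \<in> fst X (Cod A h)"
  shows "nt_comp A (yo A (Dom A h)) (vnt (Cod A h) v) (ynt h) = vnt (Dom A h) (snd X h v)"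
proof (intro ext)
  fix y g
  have dO: "Dom A h \<in> Obj A" using A h by (auto simp: category_def)
  show "nt_comp A (yo A (Dom A h)) (vnt (Cod A h) v) (ynt h) y g = vnt (Dom A h) (snd X h v) y g"
  proof (cases "y \<in> Obj A \<and> g \<in> hom A y (Dom A h)")
    case True
    then have ga: "g \<in> Arr A" "Dom A g = y" "Cod A g = Dom A h" by (auto simp: hom_def)
    have "Comp A h g \<in> hom A y (Cod A h)" using cat_comp_hom[OF A, of g y "Dom A h" h "Cod A h"] True h
      by (simp add: hom_def)
    moreover have "snd X (Comp A h g) v = snd X g (snd X h v)"
      using X ga h v unfolding presheaf_def by auto
    ultimately show ?thesis using True by (simp add: nt_comp_def yo_fst ynt_def vnt_def)
  next
    case False
    then show ?thesis by (auto simp: nt_comp_def yo_def ynt_def vnt_def)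
  qed
qed

lemma G_functor: "is_functor (elements A X) (elements A PP) Go Gm"
  unfolding is_functor_def
proof (intro conjI ballI allI impI)
  fix x assume "x \<in> Obj (elements A X)"
  then obtain y v where x: "x = (y, v)" "y \<in> Obj A" "v \<in> fst X y" by (auto simp: el_simps)
  then show "Go x \<in> Obj (elements A PP)"
    using memP[OF x(2)] Y3[OF x(2,3)] by (auto simp: el_simps Go_def tau_def)
next
  fix f assume "f \<in> Arr (elements A X)"
  then obtain h v where f: "f = (h, v)" "h \<in> Arr A" "v \<in> fst X (Cod A h)" by (auto simp: el_simps)
  have co: "Cod A h \<in> Obj A" using A f by (auto simp: category_def)
  have inP: "tau (Cod A h) v \<in> fst PP (Cod A h)"
    using memP[OF co] Y3[OF co f(3)] by (auto simp: tau_def)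
  have "snd PP h (tau (Cod A h) v) = tau (Dom A h) (snd X h v)"
    using actP[OF f(2) Y3[OF co f(3)]] NC[OF f(2,3)] by (simp add: tau_def)
  then show "Gm f \<in> hom (elements A PP) (Go (Dom (elements A X) f)) (Go (Cod (elements A X) f))"
    using f inP by (simp add: hom_def el_simps Gm_def Go_def)
next
  fix x assume "x \<in> Obj (elements A X)"
  then obtain y v where x: "x = (y, v)" "y \<in> Obj A" by (auto simp: el_simps)
  then show "Gm (Idm (elements A X) x) = Idm (elements A PP) (Go x)"
    using cat_idm_hom[OF A x(2)] by (simp add: el_simps Gm_def Go_def hom_def)
next
  fix f g assume f: "f \<in> Arr (elements A X)" and g: "g \<in> Arr (elements A X)"
    and fg: "Cod (elements A X) f = Dom (elements A X) g"
  obtain h v where hv: "f = (h, v)" "h \<in> Arr A" using f by (auto simp: el_simps)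
  obtain k w where kw: "g = (k, w)" "k \<in> Arr A" using g by (auto simp: el_simps)
  have "Cod A h = Dom A k" using fg hv kw by (simp add: el_simps)
  then have "Cod A (Comp A k h) = Cod A k"
    using cat_comp_hom[OF A, of h "Dom A h" "Cod A h" k "Cod A k"] hv kw by (simp add: hom_def)
  then show "Gm (Comp (elements A X) g f) = Comp (elements A PP) (Gm g) (Gm f)"
    using hv kw by (simp add: el_simps Gm_def)
qed

lemma F_functor: "is_functor (elements A PP) (elements A X) Fo Fm"
  unfolding is_functor_def
proof (intro conjI ballI allI impI)
  fix x assume "x \<in> Obj (elements A PP)"
  then obtain y \<tau> where x: "x = (y, \<tau>)" "y \<in> Obj A" "\<tau> \<in> fst PP y" by (auto simp: el_simps)
  then obtain \<eta> where \<eta>: "\<tau> = (yo A y, X, \<eta>)" "\<eta> \<in> nt_hom A (yo A y) X" using memP by blast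
  have "Idm A y \<in> fst (yo A y) y" using x(2) cat_idm_hom[OF A x(2)] by (simp add: yo_fst)
  then have "\<eta> y (Idm A y) \<in> fst X y" using \<eta>(2) x(2) by (auto simp: nt_hom_def)
  then show "Fo x \<in> Obj (elements A X)" using x \<eta> by (simp add: el_simps Fo_def)
next
  fix f assume "f \<in> Arr (elements A PP)"
  then obtain h \<tau> where f: "f = (h, \<tau>)" "h \<in> Arr A" "\<tau> \<in> fst PP (Cod A h)" by (auto simp: el_simps)
  have co: "Cod A h \<in> Obj A" and dO: "Dom A h \<in> Obj A" using A f by (auto simp: category_def)
  obtain \<eta> where \<eta>: "\<tau> = (yo A (Cod A h), X, \<eta>)" "\<eta> \<in> nt_hom A (yo A (Cod A h)) X"
    using memP[OF co] f(3) by blast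
  have "Idm A (Cod A h) \<in> fst (yo A (Cod A h)) (Cod A h)" using co cat_idm_hom[OF A co] by (simp add: yo_fst)
  then have inX: "\<eta> (Cod A h) (Idm A (Cod A h)) \<in> fst X (Cod A h)" using \<eta>(2) co by (auto simp: nt_hom_def)
  have hh: "h \<in> hom A (Dom A h) (Cod A h)" using f by (simp add: hom_def)
  have idd: "Idm A (Dom A h) \<in> hom A (Dom A h) (Dom A h)" using cat_idm_hom[OF A dO] .
  have "nt_comp A (yo A (Dom A h)) \<eta> (ynt h) (Dom A h) (Idm A (Dom A h)) = \<eta> (Dom A h) h"
    using dO idd cat_idr[OF A f(2)] by (simp add: nt_comp_def yo_fst ynt_def)
  also have "\<dots> = snd X h (\<eta> (Cod A h) (Idm A (Cod A h)))" using Y1[OF co \<eta>(2) hh] .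
  finally have eq: "nt_comp A (yo A (Dom A h)) \<eta> (ynt h) (Dom A h) (Idm A (Dom A h)) = snd X h (\<eta> (Cod A h) (Idm A (Cod A h)))" .
  show "Fm f \<in> hom (elements A X) (Fo (Dom (elements A PP) f)) (Fo (Cod (elements A PP) f))"
    using f \<eta> inX eq actP[OF f(2) \<eta>(2)] by (simp add: hom_def el_simps Fm_def Fo_def)
next
  fix x assume "x \<in> Obj (elements A PP)"
  then obtain y \<tau> where x: "x = (y, \<tau>)" "y \<in> Obj A" by (auto simp: el_simps)
  then show "Fm (Idm (elements A PP) x) = Idm (elements A X) (Fo x)"
    using cat_idm_hom[OF A x(2)] by (simp add: el_simps Fm_def Fo_def hom_def)
next
  fix f g assume f: "f \<in> Arr (elements A PP)" and g: "g \<in> Arr (elements A PP)"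
    and fg: "Cod (elements A PP) f = Dom (elements A PP) g"
  obtain h v where hv: "f = (h, v)" "h \<in> Arr A" using f by (auto simp: el_simps)
  obtain k w where kw: "g = (k, w)" "k \<in> Arr A" using g by (auto simp: el_simps)
  have "Cod A h = Dom A k" using fg hv kw by (simp add: el_simps)
  then have "Cod A (Comp A k h) = Cod A k"
    using cat_comp_hom[OF A, of h "Dom A h" "Cod A h" k "Cod A k"] hv kw by (simp add: hom_def)
  then show "Fm (Comp (elements A PP) g f) = Comp (elements A X) (Fm g) (Fm f)"
    using hv kw by (simp add: el_simps Fm_def)
qed

lemma FG: "\<forall>f\<in>Arr (elements A X). Fm (Gm f) = f"
proof
  fix f assume "f \<in> Arr (elements A X)"
  then obtain h v where f: "f = (h, v)" "h \<in> Arr A" "v \<in> fst X (Cod A h)" by (auto simp: el_simps)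
  have co: "Cod A h \<in> Obj A" using A f by (auto simp: category_def)
  show "Fm (Gm f) = f" using f Y4[OF co f(3)] by (simp add: Fm_def Gm_def tau_def)
qed

lemma GF: "\<forall>g\<in>Arr (elements A PP). Gm (Fm g) = g"
proof
  fix f assume "f \<in> Arr (elements A PP)"
  then obtain h \<tau> where f: "f = (h, \<tau>)" "h \<in> Arr A" "\<tau> \<in> fst PP (Cod A h)" by (auto simp: el_simps)
  have co: "Cod A h \<in> Obj A" using A f by (auto simp: category_def)
  obtain \<eta> where \<eta>: "\<tau> = (yo A (Cod A h), X, \<eta>)" "\<eta> \<in> nt_hom A (yo A (Cod A h)) X"
    using memP[OF co] f(3) by blast
  show "Gm (Fm f) = f" using f \<eta> Y2[OF co \<eta>(2)] by (simp add: Fm_def Gm_def tau_def)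
qed

lemma iso: "cat_iso (elements A X) (elements A PP) Go Gm Fo Fm"
  unfolding cat_iso_def using G_functor F_functor FG GF by blast

lemma aspherical_PP: "aspherical_cat (elements A X) \<Longrightarrow> aspherical_cat (elements A PP)"
  using cat_iso_aspherical[OF iso] .

end


theorem proposition6p9:
  fixes A :: "('oa, 'ma) cat" and B :: "('ob, 'mb) cat"
    and jo :: "'ob \<Rightarrow> ('oa, 'ma) pshA" and jm :: "'mb \<Rightarrow> ('oa, 'ma) pshA_arr"
  assumes "category A" and "category B"
    and "is_functor B (psh_cat A) jo jm"
    and "aspherical_psh_functor A B jo jm"
  shows "aspherical_functor B (full_sub (psh_cat A) (yo A ` Obj A \<union> jo ` Obj B)) jo jm
       \<and> aspherical_functor A (full_sub (psh_cat A) (yo A ` Obj A \<union> jo ` Obj B)) (yo A) (yo_arr A)"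
proof -
  note cA = assms(1) and cB = assms(2) and jF = assms(3)
  define S where "S = yo A ` Obj A \<union> jo ` Obj B"
  have jo_psh: "b \<in> Obj B \<Longrightarrow> presheaf A (jo b)" for b
  proof -
    assume b: "b \<in> Obj B"
    have "\<forall>x\<in>Obj B. jo x \<in> Obj (psh_cat A)" using jF unfolding is_functor_def by (elim conjE)
    then have "jo b \<in> Obj (psh_cat A)" using b by blast
    then show ?thesis by (simp add: psh_cat_def)
  qed
  have Spsh: "\<forall>Y\<in>S. presheaf A Y" using jo_psh yo_presheaf[OF cA] by (auto simp: S_def)
  have h1: "\<forall>b\<in>Obj B. aspherical_psh A (jo b)"
    and h2: "\<forall>b\<in>Obj B. aspherical_psh B (jstar A B jo jm (jo b))"
    and h3: "\<forall>a\<in>Obj A. aspherical_psh B (jstar A B jo jm (yo A a))"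
    using assms(4) by (auto simp: aspherical_psh_functor_def)
  have c1: "aspherical_functor B (full_sub (psh_cat A) S) jo jm"
    unfolding aspherical_functor_def
  proof
    fix e assume "e \<in> Obj (full_sub (psh_cat A) S)"
    then have e: "e \<in> S" by simp
    have joS: "d \<in> Obj B \<Longrightarrow> jo d \<in> S" for d by (simp add: S_def)
    have cod: "f \<in> Arr B \<Longrightarrow> Cod B f \<in> Obj B" for f using cB by (auto simp: category_def)
    have hs: "hom (full_sub (psh_cat A) S) (jo d) e = hom (psh_cat A) (jo d) e" if "d \<in> Obj B" for d
      by (rule hom_full_sub[OF joS[OF that] e])
    have f1: "(\<lambda>d. if d \<in> Obj B then hom (full_sub (psh_cat A) S) (jo d) e else {})
        = (\<lambda>d. if d \<in> Obj B then hom (psh_cat A) (jo d) e else {})"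
      by (rule ext) (simp add: hs)
    have f2: "(\<lambda>f g. if f \<in> Arr B \<and> g \<in> hom (full_sub (psh_cat A) S) (jo (Cod B f)) e
                then Comp (full_sub (psh_cat A) S) g (jm f) else undefined)
        = (\<lambda>f g. if f \<in> Arr B \<and> g \<in> hom (psh_cat A) (jo (Cod B f)) e
                then Comp (psh_cat A) g (jm f) else undefined)"
    proof (intro ext)
      fix f g
      show "(if f \<in> Arr B \<and> g \<in> hom (full_sub (psh_cat A) S) (jo (Cod B f)) e
                then Comp (full_sub (psh_cat A) S) g (jm f) else undefined)
          = (if f \<in> Arr B \<and> g \<in> hom (psh_cat A) (jo (Cod B f)) e
                then Comp (psh_cat A) g (jm f) else undefined)"
        by (cases "f \<in> Arr B") (simp_all only: hs cod full_sub_simps simp_thms)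
    qed
    have "pull_hom B (full_sub (psh_cat A) S) jo jm e = jstar A B jo jm e"
      unfolding jstar_def pull_hom_def f1 f2 ..
    then have "slice B (full_sub (psh_cat A) S) jo jm e = elements B (jstar A B jo jm e)"
      by (simp add: slice_def)
    moreover have "aspherical_psh B (jstar A B jo jm e)"
    proof (cases "e \<in> jo ` Obj B")
      case True
      then show ?thesis using h2 by blast
    next
      case False
      then show ?thesis using e h3 unfolding S_def by blast
    qed
    ultimately show "aspherical_cat (slice B (full_sub (psh_cat A) S) jo jm e)"
      by (simp add: aspherical_psh_def)
  qed
  have c2: "aspherical_functor A (full_sub (psh_cat A) S) (yo A) (yo_arr A)"
    unfolding aspherical_functor_def
  proof
    fix e assume "e \<in> Obj (full_sub (psh_cat A) S)"
    then have e: "e \<in> S" by simp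
    interpret Y: yon A e S
      using cA Spsh e by (unfold_locales) (auto simp: S_def)
    have "aspherical_cat (elements A e)"
    proof (cases "e \<in> jo ` Obj B")
      case True
      then show ?thesis using h1 by (auto simp: aspherical_psh_def)
    next
      case False
      then obtain a where a: "a \<in> Obj A" "e = yo A a" using e by (auto simp: S_def)
      show ?thesis using term_cat.aspherical[OF yo_term[OF cA a(1)]] a by simp
    qed
    then show "aspherical_cat (slice A (full_sub (psh_cat A) S) (yo A) (yo_arr A) e)"
      using Y.aspherical_PP by (simp add: slice_def)
  qed
  show ?thesis using c1 c2 by (simp add: S_def)
qed

end
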